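(* Let $n\ge 2$, let $(x_1,\dots,x_{n+1})$ be the standard coordinates on $\mathbb{R}^{n+1}$, and let $(y_1,\dots,y_{n+1})$ be another global coordinate system on $\mathbb{R}^{n+1}$ such that the coordinate transformation $(x_1,\dots,x_{n+1})\mapsto(y_1,\dots,y_{n+1})$ is a $C^2$ diffeomorphism of $\mathbb{R}^{n+1}$. Suppose that for every $C^2$ function $\varphi$ on $\mathbb{R}^{n+1}$, $\varphi$ satisfies $\sum_{i=1}^n \frac{\partial^2 \varphi}{\partial x_i^2} - \frac{\partial^2 \varphi}{\partial x_{n+1}^2} = 0$ everywhere if and only if $\varphi$ (expressed in the $y$-coordinates) satisfies $\sum_{i=1}^n \frac{\partial^2 \varphi}{\partial y_i^2} - \frac{\partial^2 \varphi}{\partial y_{n+1}^2} = 0$ everywhere. Then the coordinate transformation $(x_1,\dots,x_{n+1})\mapsto(y_1,\dots,y_{n+1})$ is $C^\infty$. *)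

theory Defs
  imports "HOL-Analysis.Analysis"
begin

definition partial :: "'m::finite \<Rightarrow> (real^'m \<Rightarrow> real) \<Rightarrow> real^'m \<Rightarrow> real" where
  "partial i f x = deriv (\<lambda>t. f (x + t *\<^sub>R axis i 1)) 0"

fun Ck :: "nat \<Rightarrow> (real^'m::finite \<Rightarrow> real) \<Rightarrow> bool" where
  "Ck 0 f = continuous_on UNIV f"
| "Ck (Suc k) f = (continuous_on UNIV f \<and>
      (\<forall>i x. (\<lambda>t. f (x + t *\<^sub>R axis i 1)) differentiable (at 0)) \<and>
      (\<forall>i. Ck k (partial i f)))"

definition Cinf :: "(real^'m::finite \<Rightarrow> real) \<Rightarrow> bool" where
  "Cinf f = (\<forall>k. Ck k f)"

definition Ck_map :: "nat \<Rightarrow> (real^'m::finite \<Rightarrow> real^'m) \<Rightarrow> bool" where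
  "Ck_map k F = (\<forall>j. Ck k (\<lambda>x. F x $ j))"

definition Cinf_map :: "(real^'m::finite \<Rightarrow> real^'m) \<Rightarrow> bool" where
  "Cinf_map F = (\<forall>j. Cinf (\<lambda>x. F x $ j))"

definition C2_diffeomorphism :: "(real^'m::finite \<Rightarrow> real^'m) \<Rightarrow> bool" where
  "C2_diffeomorphism F = (bij F \<and> Ck_map 2 F \<and> Ck_map 2 (inv F))"

text \<open>Wave operator on R^{n+1} = real^('n + unit): space coordinates Inl i, time coordinate Inr ().\<close>
definition wave :: "(real^('n::finite + unit) \<Rightarrow> real) \<Rightarrow> real^('n + unit) \<Rightarrow> real" where
  "wave \<phi> x = (\<Sum>i\<in>UNIV. partial (Inl i) (partial (Inl i) \<phi>) x)
               - partial (Inr ()) (partial (Inr ()) \<phi>) x"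

end

theory Submission
  imports Defs
begin


definition ld :: "(real^'m::finite \<Rightarrow> real) \<Rightarrow> bool" where
  "ld f = (\<forall>i x. (\<lambda>t. f (x + t *\<^sub>R axis i 1)) differentiable (at 0))"

lemma Ck_Suc: "Ck (Suc k) f = (continuous_on UNIV f \<and> ld f \<and> (\<forall>i. Ck k (partial i f)))"
  by (simp add: ld_def)

declare Ck.simps(2)[simp del]

lemma Ck_cont: "Ck k f \<Longrightarrow> continuous_on UNIV f"
  by (cases k) (auto simp: Ck_Suc)

lemma Ck_mono: "Ck (Suc k) f \<Longrightarrow> Ck k f"
proof (induction k arbitrary: f)
  case 0 then show ?case by (simp add: Ck_Suc)
next
  case (Suc k) then show ?case by (simp only: Ck_Suc) blast
qed

lemma Ck_mono': "k \<le> m \<Longrightarrow> Ck m f \<Longrightarrow> Ck k f"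
  by (induction m rule: dec_induct) (auto dest: Ck_mono)

lemma partial_DERIV:
  assumes "ld f"
  shows "((\<lambda>t. f (x + t *\<^sub>R axis i 1)) has_real_derivative partial i f x) (at 0)"
  using assms unfolding ld_def partial_def
  by (simp add: DERIV_deriv_iff_real_differentiable)

lemma partial_DERIV_at:
  assumes "ld f"
  shows "((\<lambda>t. f (x + t *\<^sub>R axis i 1)) has_real_derivative partial i f (x + t0 *\<^sub>R axis i 1)) (at t0)"
proof -
  have "((\<lambda>h. f ((x + t0 *\<^sub>R axis i 1) + h *\<^sub>R axis i 1)) has_real_derivative partial i f (x + t0 *\<^sub>R axis i 1)) (at 0)"
    by (rule partial_DERIV[OF assms])
  moreover have "(\<lambda>h. f ((x + t0 *\<^sub>R axis i 1) + h *\<^sub>R axis i 1)) = (\<lambda>h. f (x + (h + t0) *\<^sub>R axis i 1))"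
    by (auto simp: algebra_simps)
  ultimately show ?thesis using DERIV_shift[of "\<lambda>t. f (x + t *\<^sub>R axis i 1)" _ 0 t0] by simp
qed

lemma ld_partial: "ld f \<Longrightarrow> ld g \<Longrightarrow> True" by simp

lemma partial_unique:
  assumes "((\<lambda>t. f (x + t *\<^sub>R axis i 1)) has_real_derivative D) (at 0)"
  shows "partial i f x = D"
  using assms unfolding partial_def by (rule DERIV_imp_deriv)

lemma ld_iff: "ld f \<longleftrightarrow> (\<forall>i x. \<exists>D. ((\<lambda>t. f (x + t *\<^sub>R axis i 1)) has_real_derivative D) (at 0))"
  unfolding ld_def by (simp add: real_differentiable_def)

lemma ld_const: "ld (\<lambda>x. c)" unfolding ld_def by simp

lemma partial_const: "partial i (\<lambda>x. c) x = 0"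
  by (rule partial_unique) simp

lemma ld_add: "ld f \<Longrightarrow> ld g \<Longrightarrow> ld (\<lambda>x. f x + g x)"
  unfolding ld_def by auto

lemma ld_mult: "ld f \<Longrightarrow> ld g \<Longrightarrow> ld (\<lambda>x. f x * g x)"
  unfolding ld_def by auto

lemma partial_add: "ld f \<Longrightarrow> ld g \<Longrightarrow> partial i (\<lambda>x. f x + g x) x = partial i f x + partial i g x"
  by (rule partial_unique) (intro DERIV_add partial_DERIV)

lemma partial_mult: "ld f \<Longrightarrow> ld g \<Longrightarrow> partial i (\<lambda>x. f x * g x) x = partial i f x * g x + f x * partial i g x"
  apply (rule partial_unique)
  using DERIV_mult[OF partial_DERIV[of f x i] partial_DERIV[of g x i]] by (simp add: mult.commute)

lemma ld_sum: "finite S \<Longrightarrow> (\<And>a. a \<in> S \<Longrightarrow> ld (f a)) \<Longrightarrow> ld (\<lambda>x. \<Sum>a\<in>S. f a x)"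
  unfolding ld_def by (auto intro!: differentiable_sum)

lemma partial_sum: "finite S \<Longrightarrow> (\<And>a. a \<in> S \<Longrightarrow> ld (f a)) \<Longrightarrow>
   partial i (\<lambda>x. \<Sum>a\<in>S. f a x) x = (\<Sum>a\<in>S. partial i (f a) x)"
  by (rule partial_unique) (auto intro!: DERIV_sum partial_DERIV)

lemma Ck_ld: "Ck (Suc k) f \<Longrightarrow> ld f" by (simp add: Ck_Suc)

lemma Ck_const: "Ck k (\<lambda>x::real^'m::finite. c)"
proof (induction k arbitrary: c)
  case 0 then show ?case by simp
next
  case (Suc k)
  have e: "partial i (\<lambda>x. c) = (\<lambda>x. 0)" for i::'m by (rule ext) (rule partial_const)
  have "Ck k (partial i (\<lambda>x. c))" for i::'m unfolding e using Suc.IH by blast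
  then show ?case by (simp add: Ck_Suc ld_const)
qed

lemma Ck_add: "Ck k f \<Longrightarrow> Ck k g \<Longrightarrow> Ck k (\<lambda>x. f x + g x)"
proof (induction k arbitrary: f g)
  case 0 then show ?case by (auto intro: continuous_intros)
next
  case (Suc k)
  have "partial i (\<lambda>x. f x + g x) = (\<lambda>x. partial i f x + partial i g x)" for i
    using Suc.prems by (intro ext partial_add) (auto simp: Ck_Suc)
  then show ?case using Suc by (auto simp: Ck_Suc intro: continuous_intros ld_add)
qed

lemma Ck_mult: "Ck k f \<Longrightarrow> Ck k g \<Longrightarrow> Ck k (\<lambda>x. f x * g x)"
proof (induction k arbitrary: f g)
  case 0 then show ?case by (auto intro: continuous_intros)
next
  case (Suc k)
  have "partial i (\<lambda>x. f x * g x) = (\<lambda>x. partial i f x * g x + f x * partial i g x)" for i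
    using Suc.prems by (intro ext partial_mult) (auto simp: Ck_Suc)
  moreover have "Ck k f" "Ck k g" using Suc.prems Ck_mono by blast+
  ultimately show ?case using Suc by (auto simp: Ck_Suc intro!: continuous_intros ld_mult Ck_add)
qed

lemma Ck_sum: "finite S \<Longrightarrow> (\<And>a. a \<in> S \<Longrightarrow> Ck k (f a)) \<Longrightarrow> Ck k (\<lambda>x. \<Sum>a\<in>S. f a x)"
proof (induction S rule: finite_induct)
  case empty then show ?case by (simp add: Ck_const)
next
  case (insert a S) then show ?case by (simp add: Ck_add)
qed

lemma coord_line: "(\<lambda>t. (x + t *\<^sub>R axis i 1) $ j) = (\<lambda>t. x $ j + t * (if j = i then 1 else 0))"
  by (auto simp: axis_def)

lemma ld_coord: "ld (\<lambda>y. y $ j)"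
  unfolding ld_def coord_line by simp

lemma partial_coord: "partial i (\<lambda>y. y $ j) x = (if j = i then 1 else 0)"
  apply (rule partial_unique) unfolding coord_line
  by (auto intro!: derivative_eq_intros)

lemma Ck_coord: "Ck k (\<lambda>y. y $ j)"
proof (cases k)
  case 0 then show ?thesis by (simp add: continuous_on_component)
next
  case (Suc m)
  have "partial i (\<lambda>y. y $ j) = (\<lambda>x. if j = i then 1 else 0)" for i
    by (rule ext) (rule partial_coord)
  then show ?thesis using Suc by (simp add: Ck_Suc ld_coord Ck_const continuous_on_component)
qed

lemma partial_cmult: "ld f \<Longrightarrow> partial i (\<lambda>x. c * f x) x = c * partial i f x"
  by (rule partial_unique) (intro DERIV_cmult partial_DERIV)

lemma ld_cmult: "ld f \<Longrightarrow> ld (\<lambda>x. c * f x)"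
  unfolding ld_def by auto

definition eta :: "'n + unit \<Rightarrow> real" where
  "eta a = (case a of Inl _ \<Rightarrow> 1 | Inr _ \<Rightarrow> -1)"

lemma eta_sq[simp]: "eta a * eta a = 1"
  by (cases a) (auto simp: eta_def)

lemma eta_ne0[simp]: "eta a \<noteq> 0"
  by (cases a) (auto simp: eta_def)

lemma sum_plus_unit: "(\<Sum>a\<in>UNIV. g a) = (\<Sum>i\<in>UNIV. g (Inl i)) + g (Inr ())"
  for g :: "'n::finite + unit \<Rightarrow> real"
proof -
  have "(\<Sum>a\<in>UNIV. g a) = (\<Sum>a\<in>UNIV <+> UNIV. g a)" by simp
  also have "\<dots> = (\<Sum>i\<in>UNIV. g (Inl i)) + (\<Sum>u\<in>(UNIV::unit set). g (Inr u))"
    by (subst sum.Plus) (auto simp: o_def)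
  also have "(\<Sum>u\<in>(UNIV::unit set). g (Inr u)) = g (Inr ())"
    by (simp add: UNIV_unit)
  finally show ?thesis .
qed

lemma wave_eq: "wave \<phi> x = (\<Sum>a\<in>UNIV. eta a * partial a (partial a \<phi>) x)"
  unfolding wave_def by (subst sum_plus_unit) (simp add: eta_def)

definition BB :: "(real^('n::finite + unit) \<Rightarrow> real) \<Rightarrow> (real^('n + unit) \<Rightarrow> real) \<Rightarrow> real^('n + unit) \<Rightarrow> real" where
  "BB f g x = (\<Sum>a\<in>UNIV. eta a * partial a f x * partial a g x)"

lemma Ck2_D:
  assumes "Ck 2 f"
  shows "ld f" "ld (partial a f)" "Ck 1 (partial a f)" "Ck 0 (partial b (partial a f))" "Ck 2 f"
  using assms by (auto simp: numeral_2_eq_2 Ck_Suc)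

lemma wave_mult:
  assumes f: "Ck 2 f" and g: "Ck 2 g"
  shows "wave (\<lambda>x. f x * g x) x = f x * wave g x + g x * wave f x + 2 * BB f g x"
proof -
  have e1: "partial a (\<lambda>x. f x * g x) = (\<lambda>x. partial a f x * g x + f x * partial a g x)" for a
    by (rule ext, rule partial_mult) (use Ck2_D[OF f] Ck2_D[OF g] in auto)
  have e2: "partial a (\<lambda>x. partial a f x * g x + f x * partial a g x) x =
      partial a (partial a f) x * g x + partial a f x * partial a g x
      + (partial a f x * partial a g x + f x * partial a (partial a g) x)" for a
    using Ck2_D[OF f] Ck2_D[OF g]
    by (simp add: partial_add partial_mult ld_mult)
  show ?thesis unfolding wave_eq BB_def e1 e2
    by (simp add: algebra_simps sum.distrib sum_distrib_left)
qed

lemma wave_lin: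
  assumes f: "Ck 2 f" and g: "Ck 2 g"
  shows "wave (\<lambda>x. c * f x + d * g x) x = c * wave f x + d * wave g x"
proof -
  have e1: "partial a (\<lambda>x. c * f x + d * g x) = (\<lambda>x. c * partial a f x + d * partial a g x)" for a
    by (rule ext) (use Ck2_D[OF f] Ck2_D[OF g] in \<open>simp add: partial_add partial_cmult ld_cmult\<close>)
  have e2: "partial a (\<lambda>x. c * partial a f x + d * partial a g x) x =
      c * partial a (partial a f) x + d * partial a (partial a g) x" for a
    using Ck2_D[OF f] Ck2_D[OF g]
    by (simp add: partial_add partial_cmult ld_cmult)
  show ?thesis unfolding wave_eq e1 e2
    by (simp add: algebra_simps sum.distrib sum_distrib_left)
qed

lemma wave_coord: "wave (\<lambda>y. y $ j) x = 0"
proof -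
  have "partial a (\<lambda>y. y $ j) = (\<lambda>x. if j = a then 1 else 0)" for a
    by (rule ext) (rule partial_coord)
  then show ?thesis unfolding wave_eq by (simp add: partial_const)
qed

lemma BB_coord: "BB (\<lambda>y. y $ j) (\<lambda>y. y $ k) x = (if j = k then eta j else 0)"
  unfolding BB_def partial_coord
  by (simp add: if_distrib[of "\<lambda>u. _ * u"] if_distrib[of "\<lambda>u. u * _"] cong: if_cong)



lemma mixed_MVT:
  assumes f: "Ck 2 f" and h: "h > 0"
  shows "\<exists>p. dist p x \<le> 2*h \<and>
    f (x + h *\<^sub>R axis a 1 + h *\<^sub>R axis c 1) - f (x + h *\<^sub>R axis a 1) - f (x + h *\<^sub>R axis c 1) + f x
      = h * h * partial c (partial a f) p"
proof -
  let ?u = "axis a 1 :: real^'a" and ?v = "axis c 1 :: real^'a"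
  have ldf: "ld f" and ldp: "ld (partial a f)" using Ck2_D[OF f] by auto
  define \<phi> where "\<phi> s = f ((x + h *\<^sub>R ?v) + s *\<^sub>R ?u) - f (x + s *\<^sub>R ?u)" for s
  have d\<phi>: "DERIV \<phi> s :> partial a f ((x + h *\<^sub>R ?v) + s *\<^sub>R ?u) - partial a f (x + s *\<^sub>R ?u)" for s
    unfolding \<phi>_def by (intro DERIV_diff partial_DERIV_at ldf)
  obtain \<sigma> where s: "0 < \<sigma>" "\<sigma> < h" and
    e1: "\<phi> h - \<phi> 0 = (h - 0) * (partial a f ((x + h *\<^sub>R ?v) + \<sigma> *\<^sub>R ?u) - partial a f (x + \<sigma> *\<^sub>R ?u))"
    using MVT2[OF h d\<phi>] by blast
  define \<psi> where "\<psi> t = partial a f ((x + \<sigma> *\<^sub>R ?u) + t *\<^sub>R ?v)" for t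
  have d\<psi>: "DERIV \<psi> t :> partial c (partial a f) ((x + \<sigma> *\<^sub>R ?u) + t *\<^sub>R ?v)" for t
    unfolding \<psi>_def by (intro partial_DERIV_at ldp)
  obtain \<tau> where t: "0 < \<tau>" "\<tau> < h" and
    e2: "\<psi> h - \<psi> 0 = (h - 0) * partial c (partial a f) ((x + \<sigma> *\<^sub>R ?u) + \<tau> *\<^sub>R ?v)"
    using MVT2[OF h d\<psi>] by blast
  let ?p = "(x + \<sigma> *\<^sub>R ?u) + \<tau> *\<^sub>R ?v"
  have "dist ?p x = norm (\<sigma> *\<^sub>R ?u + \<tau> *\<^sub>R ?v)" by (simp add: dist_norm)
  also have "\<dots> \<le> norm (\<sigma> *\<^sub>R ?u) + norm (\<tau> *\<^sub>R ?v)" by (rule norm_triangle_ineq)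
  also have "\<dots> \<le> 2 * h" using s t by simp
  finally have dp: "dist ?p x \<le> 2*h" .
  have "\<phi> h - \<phi> 0 = f (x + h *\<^sub>R ?u + h *\<^sub>R ?v) - f (x + h *\<^sub>R ?u) - f (x + h *\<^sub>R ?v) + f x"
    unfolding \<phi>_def by (simp add: algebra_simps)
  moreover have "partial a f ((x + h *\<^sub>R ?v) + \<sigma> *\<^sub>R ?u) - partial a f (x + \<sigma> *\<^sub>R ?u) = \<psi> h - \<psi> 0"
    unfolding \<psi>_def by (simp add: algebra_simps)
  ultimately show ?thesis using e1 e2 dp by (intro exI[of _ ?p]) (simp add: algebra_simps)
qed

lemma schwarz:
  assumes f: "Ck 2 f"
  shows "partial c (partial a f) x = partial a (partial c f) x"
proof (rule ccontr)
  let ?g1 = "partial c (partial a f)" and ?g2 = "partial a (partial c f)"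
  assume ne: "?g1 x \<noteq> ?g2 x"
  have "continuous_on UNIV ?g1" "continuous_on UNIV ?g2" using Ck2_D[OF f] Ck_cont by blast+
  then have c1: "continuous (at x) ?g1" and c2: "continuous (at x) ?g2"
    by (simp_all add: continuous_on_eq_continuous_at)
  define e where "e = \<bar>?g1 x - ?g2 x\<bar> / 2"
  have e: "e > 0" using ne by (simp add: e_def)
  obtain d1 where d1: "d1 > 0" "\<And>y. dist y x < d1 \<Longrightarrow> dist (?g1 y) (?g1 x) < e"
    using c1 e unfolding continuous_at_eps_delta by blast
  obtain d2 where d2: "d2 > 0" "\<And>y. dist y x < d2 \<Longrightarrow> dist (?g2 y) (?g2 x) < e"
    using c2 e unfolding continuous_at_eps_delta by blast
  define h where "h = min d1 d2 / 4"
  have h: "h > 0" using d1 d2 by (simp add: h_def)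
  obtain p where p: "dist p x \<le> 2*h" and
    ep: "f (x + h *\<^sub>R axis a 1 + h *\<^sub>R axis c 1) - f (x + h *\<^sub>R axis a 1) - f (x + h *\<^sub>R axis c 1) + f x
      = h * h * ?g1 p"
    using mixed_MVT[OF f h, of x a c] by blast
  obtain q where q: "dist q x \<le> 2*h" and
    eq: "f (x + h *\<^sub>R axis c 1 + h *\<^sub>R axis a 1) - f (x + h *\<^sub>R axis c 1) - f (x + h *\<^sub>R axis a 1) + f x
      = h * h * ?g2 q"
    using mixed_MVT[OF f h, of x c a] by blast
  have "h * h * ?g1 p = h * h * ?g2 q" using ep eq by (simp add: algebra_simps)
  then have pq: "?g1 p = ?g2 q" using h by simp
  have "dist p x < d1" "dist q x < d2" using p q h d1 d2 by (auto simp: h_def)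
  then have "dist (?g1 p) (?g1 x) < e" "dist (?g2 q) (?g2 x) < e" using d1 d2 by auto
  then have "\<bar>?g1 x - ?g2 x\<bar> < 2 * e" using pq by (simp add: dist_real_def)
  then show False by (simp add: e_def)
qed

lemma const_line:
  assumes "ld g" "\<And>x. partial i g x = 0"
  shows "g (x + t *\<^sub>R axis i 1) = g x"
proof -
  have "\<forall>s. DERIV (\<lambda>t. g (x + t *\<^sub>R axis i 1)) s :> 0"
    using partial_DERIV_at[OF assms(1)] assms(2) by metis
  from DERIV_isconst_all[OF this, of t 0] show ?thesis by simp
qed

lemma const_all:
  fixes g :: "real^'m::finite \<Rightarrow> real"
  assumes "ld g" "\<And>i x. partial i g x = 0"
  shows "g y = g x"
proof -
  have "g (\<chi> i. if i \<in> S then y $ i else x $ i) = g x" if "finite S" for S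
    using that
  proof (induction S rule: finite_induct)
    case empty then show ?case by simp
  next
    case (insert c S)
    have "(\<chi> i. if i \<in> insert c S then y $ i else x $ i) =
       (\<chi> i. if i \<in> S then y $ i else x $ i) + (y $ c - x $ c) *\<^sub>R axis c 1"
      using insert.hyps by (auto simp: vec_eq_iff axis_def)
    then show ?case using const_line[OF assms] insert.IH by simp
  qed
  from this[of UNIV] show ?thesis by simp
qed



lemma col_from_row:
  fixes M :: "'m::finite \<Rightarrow> 'm \<Rightarrow> real" and e :: "'m \<Rightarrow> real"
  assumes e: "\<And>a. e a * e a = 1" and L: "L \<noteq> 0"
  and row: "\<And>j k. (\<Sum>a\<in>UNIV. e a * M a j * M a k) = (if j = k then e j * L else 0)"
  shows "(\<Sum>j\<in>UNIV. e j * M a j * M b j) = (if a = b then e a * L else 0)"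
proof -
  define A :: "real^'m^'m" where "A = (\<chi> j a. M a j)"
  define Bm :: "real^'m^'m" where "Bm = (\<chi> a k. e a * M a k * e k / L)"
  have "A ** Bm = mat 1"
  proof -
    have "(\<Sum>a\<in>UNIV. M a j * (e a * M a k * e k / L)) = (if j = k then 1 else 0)" for j k
    proof -
      have "(\<Sum>a\<in>UNIV. M a j * (e a * M a k * e k / L)) = (e k / L) * (\<Sum>a\<in>UNIV. e a * M a j * M a k)"
        by (simp add: sum_distrib_left algebra_simps)
      also have "\<dots> = (if j = k then 1 else 0)" using row[of j k] L e[of k] by simp
      finally show ?thesis .
    qed
    then show ?thesis by (simp add: A_def Bm_def matrix_matrix_mult_def mat_def vec_eq_iff)
  qed
  then have "Bm ** A = mat 1" by (simp add: matrix_left_right_inverse)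
  then have "(Bm ** A) $ a $ b = (if a = b then 1 else 0)" by (simp add: mat_def)
  then have "(\<Sum>j\<in>UNIV. e a * M a j * e j / L * M b j) = (if a = b then 1 else 0)"
    by (simp add: A_def Bm_def matrix_matrix_mult_def)
  then have "(e a * L) * (\<Sum>j\<in>UNIV. e a * M a j * e j / L * M b j) = (e a * L) * (if a = b then 1 else 0)"
    by simp
  moreover have "(e a * L) * (\<Sum>j\<in>UNIV. e a * M a j * e j / L * M b j) = (\<Sum>j\<in>UNIV. e j * M a j * M b j)"
  proof -
    have ea: "e a * (e a * z) = z" for z using e[of a] by (metis mult.assoc mult_1)
    show ?thesis using L by (simp add: sum_distrib_left algebra_simps ea)
  qed
  ultimately have "(\<Sum>j\<in>UNIV. e j * M a j * M b j) = (e a * L) * (if a = b then 1 else 0)"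
    by (metis (no_types))
  then show ?thesis by simp
qed

lemma christoffel:
  fixes X :: "'m::finite \<Rightarrow> 'm \<Rightarrow> 'm \<Rightarrow> real" and Y :: "'m \<Rightarrow> 'm \<Rightarrow> real"
    and e Lc :: "'m \<Rightarrow> real"
  assumes e: "\<And>a. e a * e a = 1" and L: "L \<noteq> 0" and N: "CARD('m) \<noteq> 2"
  and sym: "\<And>j a b. X j a b = X j b a"
  and E: "\<And>a b c. (\<Sum>j\<in>UNIV. e j * (X j c a * Y j b + Y j a * X j c b)) = (if a = b then e a * Lc c else 0)"
  and W: "\<And>j. (\<Sum>a\<in>UNIV. e a * X j a a) = 0"
  and row: "\<And>j k. (\<Sum>a\<in>UNIV. e a * Y j a * Y k a) = (if j = k then e j * L else 0)"
  shows "Lc c = 0" "X k a b = 0"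
proof -
  define S where "S a b c = (\<Sum>j\<in>UNIV. e j * X j a b * Y j c)" for a b c
  define R where "R p q r = (if p = q then e p * Lc r else 0)" for p q r
  have E': "S c a b + S c b a = R a b c" for a b c
    using E[where a=a and b=b and c=c] unfolding S_def R_def
    by (simp add: sum.distrib[symmetric] algebra_simps)
  have Ssym: "S a b c = S b a c" for a b c unfolding S_def using sym by simp
  have Sf2: "2 * S a b c = R b c a + R a c b - R a b c" for a b c
    using E'[where c=a and a=b and b=c] E'[where c=b and a=a and b=c] E'[where c=c and a=a and b=b]
      Ssym[of a c b] Ssym[of b c a] Ssym[of b a c]
    by linarith
  have Sf: "S a b c = (R b c a + R a c b - R a b c) / 2" for a b c
    using Sf2[of a b c] by simp
  have tr0: "(\<Sum>a\<in>UNIV. e a * S a a c) = 0" for c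
  proof -
    have "(\<Sum>a\<in>UNIV. e a * S a a c) = (\<Sum>a\<in>UNIV. \<Sum>j\<in>UNIV. e j * Y j c * (e a * X j a a))"
      unfolding S_def by (simp add: sum_distrib_left algebra_simps)
    also have "\<dots> = (\<Sum>j\<in>UNIV. e j * Y j c * (\<Sum>a\<in>UNIV. e a * X j a a))"
      by (subst sum.swap) (simp add: sum_distrib_left)
    also have "\<dots> = 0" using W by simp
    finally show ?thesis .
  qed
  have trR: "(\<Sum>a\<in>UNIV. e a * S a a c) = (2 - real CARD('m)) * Lc c / 2" for c
  proof -
    have "(\<Sum>a\<in>UNIV. e a * S a a c) = (\<Sum>a\<in>UNIV. (e a * R a c a + e a * R a c a - e a * R a a c) / 2)"
      unfolding Sf by (simp add: algebra_simps)
    also have "\<dots> = ((\<Sum>a\<in>UNIV. e a * R a c a) + (\<Sum>a\<in>UNIV. e a * R a c a) - (\<Sum>a\<in>UNIV. e a * R a a c)) / 2"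
      by (simp only: sum_divide_distrib[symmetric] sum_subtractf sum.distrib)
    also have "(\<Sum>a\<in>UNIV. e a * R a c a) = Lc c"
      unfolding R_def using e[of c] by (simp add: if_distrib[of "\<lambda>u. _ * u"] cong: if_cong)
    also have "(\<Sum>a\<in>UNIV. e a * R a a c) = real CARD('m) * Lc c"
      unfolding R_def by (simp add: mult.assoc[symmetric] e)
    finally show ?thesis by (simp add: algebra_simps)
  qed
  have Lc0: "Lc c = 0" for c
    using tr0[of c] trR[of c] N by simp
  then show "Lc c = 0" .
  have S0: "S a b c = 0" for a b c unfolding Sf R_def by (simp add: Lc0)
  have "0 = (\<Sum>c\<in>UNIV. e c * S a b c * Y k c)" by (simp add: S0)
  also have "\<dots> = (\<Sum>c\<in>UNIV. \<Sum>j\<in>UNIV. e j * X j a b * (e c * Y j c * Y k c))"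
    unfolding S_def by (simp add: sum_distrib_left sum_distrib_right algebra_simps)
  also have "\<dots> = (\<Sum>j\<in>UNIV. e j * X j a b * (\<Sum>c\<in>UNIV. e c * Y j c * Y k c))"
    by (subst sum.swap) (simp add: sum_distrib_left)
  also have "\<dots> = X k a b * L"
    unfolding row using e[of k] by (simp add: if_distrib[of "\<lambda>u. _ * u"] cong: if_cong)
  finally show "X k a b = 0" using L by simp
qed



lemma card_plus_unit: "CARD('n::finite + unit) = CARD('n) + 1"
proof -
  have "CARD('n + unit) = card ((UNIV::'n set) <+> (UNIV::unit set))" by simp
  also have "\<dots> = CARD('n) + 1" by (subst card_Plus) auto
  finally show ?thesis .
qed

lemma deriv_zero_local:
  fixes h :: "real \<Rightarrow> real"
  assumes "DERIV h 0 :> D" "\<exists>d>0. \<forall>t. \<bar>t\<bar> < d \<longrightarrow> h t = 0"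
  shows "D = 0"
proof -
  have ev: "eventually (\<lambda>t. h t = 0) (nhds 0)"
    using assms(2) unfolding eventually_nhds_metric by (simp add: dist_real_def)
  have "DERIV (\<lambda>t. 0::real) 0 :> D"
    using assms(1) DERIV_cong_ev[OF refl ev refl] by simp
  then show ?thesis using DERIV_const DERIV_unique by blast
qed

lemma line_nonzero:
  assumes "ld g" "g x \<noteq> 0"
  shows "\<exists>d>0. \<forall>t. \<bar>t\<bar> < d \<longrightarrow> g (x + t *\<^sub>R axis c 1) \<noteq> 0"
proof -
  have "isCont (\<lambda>t. g (x + t *\<^sub>R axis c 1)) 0"
    using DERIV_isCont[OF partial_DERIV[OF assms(1)]] by blast
  then obtain d where "d > 0" "\<And>t. dist t 0 < d \<Longrightarrow> dist (g (x + t *\<^sub>R axis c 1)) (g x) < \<bar>g x\<bar>"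
    using assms(2) unfolding continuous_at_eps_delta by (metis add.right_neutral scale_zero_left zero_less_abs_iff)
  then show ?thesis
  proof (intro exI[of _ d] conjI allI impI)
    fix t :: real
    assume d: "d > 0" "\<And>t. dist t 0 < d \<Longrightarrow> dist (g (x + t *\<^sub>R axis c 1)) (g x) < \<bar>g x\<bar>"
      and t: "\<bar>t\<bar> < d"
    then have "\<bar>g (x + t *\<^sub>R axis c 1) - g x\<bar> < \<bar>g x\<bar>" by (simp add: dist_real_def)
    then show "g (x + t *\<^sub>R axis c 1) \<noteq> 0" by auto
  qed simp
qed

lemma wave_lin_diff:
  assumes f: "Ck 2 f" and g: "Ck 2 g"
  shows "wave (\<lambda>x. c * f x - d * g x) x = c * wave f x - d * wave g x"
proof -
  have "(\<lambda>x. c * f x - d * g x) = (\<lambda>x. c * f x + (-d) * g x)" by auto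
  then show ?thesis using wave_lin[OF f g, of c "-d" x] by simp
qed

theorem corollary2p4:
  fixes F :: "real^('n::finite + unit) \<Rightarrow> real^('n + unit)"
  assumes "CARD('n) \<ge> 2"
    and "C2_diffeomorphism F"
    and "\<And>\<phi>. Ck 2 \<phi> \<Longrightarrow>
           ((\<forall>x. wave \<phi> x = 0) \<longleftrightarrow> (\<forall>y. wave (\<phi> \<circ> inv F) y = 0))"
  shows "Cinf_map F"
proof -
  define f where "f = (\<lambda>j x. F x $ j)"
  have fC2: "Ck 2 (f j)" for j
    using assms(2) unfolding C2_diffeomorphism_def Ck_map_def f_def by blast
  have surjF: "F (inv F y) = y" for y
    using assms(2) unfolding C2_diffeomorphism_def by (meson bij_is_surj surj_f_inv_f)
  have hyp: "(\<forall>x. wave (\<lambda>x. \<Phi> (F x)) x = 0) \<longleftrightarrow> (\<forall>y. wave \<Phi> y = 0)"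
    if "Ck 2 (\<lambda>x. \<Phi> (F x))" for \<Phi>
  proof -
    have "(\<lambda>x. \<Phi> (F x)) \<circ> inv F = \<Phi>" by (rule ext) (simp add: surjF)
    then show ?thesis using assms(3)[OF that] by simp
  qed
  have cC2: "Ck 2 (\<lambda>y::real^('n+unit). y $ j)" for j by (rule Ck_coord)
  have W: "wave (f j) x = 0" for j x
  proof -
    have "\<forall>y. wave (\<lambda>y. y $ j) y = 0" by (simp add: wave_coord)
    then have "\<forall>x. wave (\<lambda>x. F x $ j) x = 0" using hyp[of "\<lambda>y. y $ j"] fC2[of j] by (simp add: f_def)
    then show ?thesis by (simp add: f_def)
  qed
  have off: "BB (f j) (f k) x = 0" if "j \<noteq> k" for j k x
  proof -
    have "\<forall>y. wave (\<lambda>y. y $ j * y $ k) y = 0"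
      using that by (simp add: wave_mult[OF cC2 cC2] wave_coord BB_coord)
    moreover have C: "Ck 2 (\<lambda>x. f j x * f k x)" by (intro Ck_mult fC2)
    ultimately have "\<forall>x. wave (\<lambda>x. f j x * f k x) x = 0"
      using hyp[of "\<lambda>y. y $ j * y $ k"] by (simp add: f_def)
    then show ?thesis by (simp add: wave_mult[OF fC2 fC2] W)
  qed
  have diag: "eta j * BB (f j) (f j) x = eta k * BB (f k) (f k) x" for j k x
  proof -
    have sq: "Ck 2 (\<lambda>y::real^('n+unit). y $ j * y $ j)" for j by (intro Ck_mult cC2)
    have "wave (\<lambda>y. eta j * (y $ j * y $ j) - eta k * (y $ k * y $ k)) y = 0" for y
      by (simp add: wave_lin_diff[OF sq sq] wave_mult[OF cC2 cC2] wave_coord BB_coord)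
    moreover have fsq: "Ck 2 (\<lambda>x. f j x * f j x)" for j by (intro Ck_mult fC2)
    have "Ck 2 (\<lambda>x. eta j * (f j x * f j x) + (- eta k) * (f k x * f k x))"
      by (intro Ck_add Ck_mult[OF Ck_const] fsq)
    then have "Ck 2 (\<lambda>x. eta j * (f j x * f j x) - eta k * (f k x * f k x))" by simp
    ultimately have "\<forall>x. wave (\<lambda>x. eta j * (f j x * f j x) - eta k * (f k x * f k x)) x = 0"
      using hyp[of "\<lambda>y. eta j * (y $ j * y $ j) - eta k * (y $ k * y $ k)"] by (simp add: f_def)
    then show ?thesis by (simp add: wave_lin_diff[OF fsq fsq] wave_mult[OF fC2 fC2] W)
  qed
  define j0 :: "'n + unit" where "j0 = Inr ()"
  define L where "L x = eta j0 * BB (f j0) (f j0) x" for x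
  have row: "BB (f j) (f k) x = (if j = k then eta j * L x else 0)" for j k x
  proof (cases "j = k")
    case True
    have "eta j * (eta j * BB (f j) (f j) x) = eta j * L x" unfolding L_def using diag by simp
    then show ?thesis using True by (simp add: mult.assoc[symmetric])
  qed (simp add: off)
  obtain x0 where x0: "L x0 \<noteq> 0"
  proof -
    have "\<not> (\<forall>y. wave (\<lambda>y. y $ j0 * y $ j0) y = 0)"
      by (simp add: wave_mult[OF cC2 cC2] wave_coord BB_coord)
    moreover have C: "Ck 2 (\<lambda>x. f j0 x * f j0 x)" by (intro Ck_mult fC2)
    ultimately have "\<not> (\<forall>x. wave (\<lambda>x. f j0 x * f j0 x) x = 0)"
      using hyp[of "\<lambda>y. y $ j0 * y $ j0"] by (simp add: f_def)
    then obtain x where "BB (f j0) (f j0) x \<noteq> 0" by (auto simp: wave_mult[OF fC2 fC2] W)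
    then have "L x \<noteq> 0" using row[of j0 j0 x] by simp
    then show ?thesis using that by blast
  qed
  have LC1: "Ck 1 L"
  proof -
    have "Ck 1 (partial a (f j))" for a j using Ck2_D[OF fC2] by blast
    then show ?thesis unfolding L_def[abs_def] BB_def
      by (intro Ck_mult Ck_const Ck_sum) auto
  qed
  have ldL: "ld L" using LC1 by (simp add: Ck_Suc)

  have ldp: "ld (partial a (f j))" for a j using Ck2_D[OF fC2] by blast
  have cardN: "CARD('n + unit) \<noteq> 2" using assms(1) card_plus_unit[where 'n='n] by simp
  have key: "partial c L x = 0 \<and> partial a (partial b (f k)) x = 0" if Lx: "L x \<noteq> 0" for x c a b k
  proof -
    define Y where "Y j a = partial a (f j) x" for j a
    define X where "X j c a = partial c (partial a (f j)) x" for j c a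
    have col: "(\<Sum>j\<in>UNIV. eta j * partial a (f j) z * partial b (f j) z) = (if a = b then eta a * L z else 0)"
      if "L z \<noteq> 0" for z a b
      using col_from_row[where M="\<lambda>a j. partial a (f j) z" and e=eta and L="L z", OF eta_sq that]
        row[of _ _ z] unfolding BB_def by simp
    have E: "(\<Sum>j\<in>UNIV. eta j * (X j c a * Y j b + Y j a * X j c b)) = (if a = b then eta a * partial c L x else 0)"
      for a b c
    proof -
      define c0 where "c0 = (if a = b then eta a else 0)"
      define h where "h t = (\<Sum>j\<in>UNIV. eta j * (partial a (f j) (x + t *\<^sub>R axis c 1) * partial b (f j) (x + t *\<^sub>R axis c 1)))
          - c0 * L (x + t *\<^sub>R axis c 1)" for t
      have "DERIV h 0 :> (\<Sum>j\<in>UNIV. eta j * (X j c a * Y j b + X j c b * Y j a)) - c0 * partial c L x"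
      proof -
        have dm: "DERIV (\<lambda>t. partial a (f j) (x + t *\<^sub>R axis c 1) * partial b (f j) (x + t *\<^sub>R axis c 1)) 0 :>
           partial c (partial a (f j)) x * partial b (f j) x + partial c (partial b (f j)) x * partial a (f j) x" for j
          using DERIV_mult[OF partial_DERIV[OF ldp] partial_DERIV[OF ldp]] by simp
        show ?thesis unfolding h_def X_def Y_def
          by (intro DERIV_diff DERIV_sum DERIV_cmult dm partial_DERIV ldL)
      qed
      moreover have "\<exists>d>0. \<forall>t. \<bar>t\<bar> < d \<longrightarrow> h t = 0"
      proof -
        obtain d where "d > 0" "\<forall>t. \<bar>t\<bar> < d \<longrightarrow> L (x + t *\<^sub>R axis c 1) \<noteq> 0"
          using line_nonzero[OF ldL Lx] by blast
        then show ?thesis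
        proof (intro exI[of _ d] conjI allI impI)
          fix t :: real
          assume "d > 0" "\<forall>t. \<bar>t\<bar> < d \<longrightarrow> L (x + t *\<^sub>R axis c 1) \<noteq> 0" "\<bar>t\<bar> < d"
          then have "L (x + t *\<^sub>R axis c 1) \<noteq> 0" by blast
          from col[OF this, of a b] show "h t = 0" unfolding h_def c0_def by (simp add: mult.assoc)
        qed simp
      qed
      ultimately have "(\<Sum>j\<in>UNIV. eta j * (X j c a * Y j b + X j c b * Y j a)) - c0 * partial c L x = 0"
        by (rule deriv_zero_local)
      then show ?thesis unfolding c0_def by (simp add: algebra_simps)
    qed
    have sym: "X j a b = X j b a" for j a b unfolding X_def by (rule schwarz[OF fC2])
    have Wx: "(\<Sum>a\<in>UNIV. eta a * X j a a) = 0" for j using W[of j x] unfolding wave_eq X_def .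
    have rowx: "(\<Sum>a\<in>UNIV. eta a * Y j a * Y k a) = (if j = k then eta j * L x else 0)" for j k
      using row[of j k x] unfolding BB_def Y_def .
    note ch = christoffel[where e=eta and Lc="\<lambda>c. partial c L x", OF eta_sq Lx cardN sym E Wx rowx]
    show ?thesis using ch[of c] ch(2)[of k a b] unfolding X_def by simp
  qed
  define g where "g x = L x * L x" for x
  have ldg: "ld g" unfolding g_def[abs_def] by (intro ld_mult ldL)
  have pg: "partial c g x = 0" for c x
  proof -
    have "partial c g x = partial c L x * L x + L x * partial c L x"
      unfolding g_def[abs_def] by (rule partial_mult[OF ldL ldL])
    then show ?thesis using key[of x c] by (cases "L x = 0") auto
  qed
  have Lnz: "L x \<noteq> 0" for x
  proof -
    have "g x = g x0" by (rule const_all[OF ldg pg])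
    then show ?thesis using x0 unfolding g_def by auto
  qed
  have pconst: "partial b (f k) = (\<lambda>x. partial b (f k) 0)" for b k
  proof
    fix x
    show "partial b (f k) x = partial b (f k) 0"
      by (rule const_all[OF ldp]) (use key Lnz in blast)
  qed
  have "Ck m (f k)" for m k
  proof (cases m)
    case 0 then show ?thesis using Ck_cont[OF fC2[of k]] by simp
  next
    case (Suc m')
    have "Ck m' (partial i (f k))" for i by (subst pconst) (rule Ck_const)
    then show ?thesis unfolding Suc Ck_Suc using Ck_cont[OF fC2[of k]] Ck2_D(1)[OF fC2[of k]] by blast
  qed
  then show ?thesis unfolding Cinf_map_def Cinf_def f_def by blast
qed


end
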